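(* Let $n$, $r$, $a$ be positive integers with $n=2r+1$ and $a\ge 2$. Then $$\rho_2(K(n+2a,r+a))\ \ge\ 2\,\rho_2(K(n,r)).$$
   Context: For integers $n\ge 2r$, the Kneser graph $K(n,r)$ has as vertices the $r$-element subsets of $[n]=\{1,\dots,n\}$, two vertices being adjacent iff they are disjoint. A $2$-packing of a graph $G$ is a set of vertices pairwise at distance at least $3$ in $G$; $\rho_2(G)$ is the maximum cardinality of a $2$-packing. *)

theory Defs
  imports Main
begin

(* A (simple) graph given by a vertex set V and a symmetric adjacency relation E. *)

fun walk_len :: "'a set \<Rightarrow> ('a \<Rightarrow> 'a \<Rightarrow> bool) \<Rightarrow> nat \<Rightarrow> 'a \<Rightarrow> 'a \<Rightarrow> bool" where
  "walk_len V E 0 u v \<longleftrightarrow> u \<in> V \<and> u = v"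
| "walk_len V E (Suc k) u v \<longleftrightarrow> (\<exists>w. u \<in> V \<and> E u w \<and> walk_len V E k w v)"

(* distance at least d: no walk of length < d between u and v
   (also covers disconnected pairs, whose distance is infinite) *)
definition dist_ge :: "'a set \<Rightarrow> ('a \<Rightarrow> 'a \<Rightarrow> bool) \<Rightarrow> nat \<Rightarrow> 'a \<Rightarrow> 'a \<Rightarrow> bool" where
  "dist_ge V E d u v \<longleftrightarrow> (\<forall>k<d. \<not> walk_len V E k u v)"

definition two_packing :: "'a set \<Rightarrow> ('a \<Rightarrow> 'a \<Rightarrow> bool) \<Rightarrow> 'a set \<Rightarrow> bool" where
  "two_packing V E P \<longleftrightarrow> P \<subseteq> V \<and> (\<forall>u\<in>P. \<forall>v\<in>P. u \<noteq> v \<longrightarrow> dist_ge V E 3 u v)"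

definition rho2 :: "'a set \<Rightarrow> ('a \<Rightarrow> 'a \<Rightarrow> bool) \<Rightarrow> nat" where
  "rho2 V E = Max (card ` {P. two_packing V E P})"

definition kneser_V :: "nat \<Rightarrow> nat \<Rightarrow> nat set set" where
  "kneser_V n r = {A. A \<subseteq> {1..n} \<and> card A = r}"

definition kneser_E :: "nat set \<Rightarrow> nat set \<Rightarrow> bool" where
  "kneser_E A B \<longleftrightarrow> A \<inter> B = {}"

definition rho2_kneser :: "nat \<Rightarrow> nat \<Rightarrow> nat" where
  "rho2_kneser n r = rho2 (kneser_V n r) kneser_E"

end

theory Submission
  imports Defs
begin

lemma dist_ge3:
  "dist_ge V E 3 u v \<longleftrightarrow>
     \<not>(u \<in> V \<and> u = v) \<and> \<not>(u \<in> V \<and> E u v \<and> v \<in> V) \<and>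
     \<not>(\<exists>w. u \<in> V \<and> E u w \<and> w \<in> V \<and> E w v \<and> v \<in> V)"
  unfolding dist_ge_def numeral_3_eq_3 less_Suc_eq by (auto simp: numeral_2_eq_2)

lemma small_facts:
  assumes P: "two_packing (kneser_V n r) kneser_E P" and AB: "A \<in> P" "B \<in> P" "A \<noteq> B"
  shows "A \<inter> B \<noteq> {}" "\<And>D. D \<subseteq> {1..n} \<Longrightarrow> card D \<ge> r \<Longrightarrow> D \<inter> A = {} \<Longrightarrow> D \<inter> B = {} \<Longrightarrow> False"
proof -
  have V: "A \<in> kneser_V n r" "B \<in> kneser_V n r" using P AB unfolding two_packing_def by auto
  have d: "dist_ge (kneser_V n r) kneser_E 3 A B" using P AB unfolding two_packing_def by auto
  show "A \<inter> B \<noteq> {}" using d V unfolding dist_ge3 kneser_E_def by auto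
  fix D assume D: "D \<subseteq> {1..n}" "card D \<ge> r" "D \<inter> A = {}" "D \<inter> B = {}"
  have "finite D" using D(1) finite_subset by blast
  then obtain C where C: "C \<subseteq> D" "card C = r" using D(2) obtain_subset_with_card_n by metis
  have "C \<in> kneser_V n r" using C D unfolding kneser_V_def by auto
  moreover have "kneser_E A C" "kneser_E C B" using C D unfolding kneser_E_def by auto
  ultimately show False using d V unfolding dist_ge3 by blast
qed

theorem proposition4p3:
  fixes n r a :: nat
  assumes "r > 0" and "n = 2 * r + 1" and "a \<ge> 2"
  shows "rho2_kneser (n + 2 * a) (r + a) \<ge> 2 * rho2_kneser n r"
proof -
  have fin: "finite (card ` {P. two_packing (kneser_V m s) kneser_E P})" for m s
  proof -
    have "{P. two_packing (kneser_V m s) kneser_E P} \<subseteq> Pow (Pow {1..m})"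
      unfolding two_packing_def kneser_V_def by auto
    then show ?thesis by (meson finite_Pow_iff finite_atLeastAtMost finite_imageI finite_subset)
  qed
  have ne: "card ` {P. two_packing (kneser_V m s) kneser_E P} \<noteq> {}" for m s
  proof -
    have "two_packing (kneser_V m s) kneser_E {}" unfolding two_packing_def by auto
    then show ?thesis by blast
  qed
  obtain P where P: "two_packing (kneser_V n r) kneser_E P" and cP: "card P = rho2_kneser n r"
    using Max_in[OF fin ne, of n r] unfolding rho2_kneser_def rho2_def by auto
  define X where "X = {n+1..n+a}"
  define Y where "Y = {n+a+1..n+2*a}"
  define Q where "Q = (\<lambda>A. A \<union> X) ` P \<union> (\<lambda>A. A \<union> Y) ` P"
  have PV: "A \<subseteq> {1..n} \<and> card A = r" if "A \<in> P" for A
    using P that unfolding two_packing_def kneser_V_def by auto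
  have "P \<subseteq> Pow {1..n}" using PV by auto
  then have finP: "finite P" by (rule finite_subset) simp
  have cX: "card X = a" "card Y = a" unfolding X_def Y_def by auto
  have i1: "inj_on (\<lambda>A. A \<union> X) P"
  proof (rule inj_onI)
    fix A B assume "A \<in> P" "B \<in> P" "A \<union> X = B \<union> X"
    moreover have "A \<inter> X = {}" "B \<inter> X = {}" using PV[of A] PV[of B] \<open>A \<in> P\<close> \<open>B \<in> P\<close> unfolding X_def by auto
    ultimately show "A = B" by blast
  qed
  have i2: "inj_on (\<lambda>A. A \<union> Y) P"
  proof (rule inj_onI)
    fix A B assume "A \<in> P" "B \<in> P" "A \<union> Y = B \<union> Y"
    moreover have "A \<inter> Y = {}" "B \<inter> Y = {}" using PV[of A] PV[of B] \<open>A \<in> P\<close> \<open>B \<in> P\<close> unfolding Y_def by auto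
    ultimately show "A = B" by blast
  qed
  have disj: "(\<lambda>A. A \<union> X) ` P \<inter> (\<lambda>A. A \<union> Y) ` P = {}"
  proof -
    have "n+1 \<in> A \<union> X" "n+1 \<notin> B \<union> Y" if "A \<in> P" "B \<in> P" for A B
      using PV[of B] that assms(3) unfolding X_def Y_def by auto
    then show ?thesis by blast
  qed
  have cQ: "card Q = 2 * card P"
    unfolding Q_def using card_Un_disjoint[OF _ _ disj] card_image[OF i1] card_image[OF i2] finP by simp
  have nocommon: "False" if "C \<subseteq> {1..n+2*a}" "card C = r + a" "C \<inter> S = {}" "S = X \<or> S = Y"
    "C \<inter> A = {}" "C \<inter> B = {}" "A \<in> P" "B \<in> P" "A \<noteq> B \<or> C \<inter> (X \<union> Y) = {}" for C S A B
  proof -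
    define D where "D = C \<inter> {1..n}"
    define T where "T = (if S = X then Y else X)"
    have "C \<subseteq> D \<union> T"
    proof (cases "S = X")
      case True
      then have "T = Y" unfolding T_def by simp
      show ?thesis
      proof
        fix x assume x: "x \<in> C"
        then have r: "1 \<le> x" "x \<le> n+2*a" "x \<notin> S" using that(1,3) by auto
        then have "x \<le> n \<or> (n+1 \<le> x \<and> x \<le> n+a) \<or> (n+a+1 \<le> x \<and> x \<le> n+2*a)" by arith
        then show "x \<in> D \<union> T" using r x True \<open>T = Y\<close> unfolding D_def X_def Y_def by auto
      qed
    next
      case False
      then have "T = X" "S = Y" using that(4) unfolding T_def by auto
      show ?thesis
      proof
        fix x assume x: "x \<in> C"
        then have r: "1 \<le> x" "x \<le> n+2*a" "x \<notin> S" using that(1,3) by auto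
        then have "x \<le> n \<or> (n+1 \<le> x \<and> x \<le> n+a) \<or> (n+a+1 \<le> x \<and> x \<le> n+2*a)" by arith
        then show "x \<in> D \<union> T" using r x \<open>S = Y\<close> \<open>T = X\<close> unfolding D_def X_def Y_def by auto
      qed
    qed
    hence "card C \<le> card (D \<union> T)" by (intro card_mono) (auto simp: D_def T_def X_def Y_def)
    also have "\<dots> \<le> card D + card T" by (rule card_Un_le)
    finally have cD: "card D \<ge> r" using that cX unfolding T_def by (auto split: if_splits)
    show False
    proof (cases "A = B")
      case False
      show False using small_facts(2)[OF P that(7,8) False, of D] cD that unfolding D_def by auto
    next
      case True
      then have "C \<inter> (X \<union> Y) = {}" using that by auto
      moreover have "T \<subseteq> X \<union> Y" unfolding T_def by auto
      ultimately have "C \<inter> T = {}" by blast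
      then have "C \<subseteq> {1..n} - A" using \<open>C \<subseteq> D \<union> T\<close> that(5) unfolding D_def by blast
      hence "card C \<le> card ({1..n} - A)" by (intro card_mono) auto
      also have "\<dots> = n - r" using PV[OF that(7)] card_Diff_subset[of A "{1..n}"] finite_subset[of A "{1..n}"] by auto
      finally show False using that assms by simp
    qed
  qed
  have Qalt: "U \<in> Q \<longleftrightarrow> (\<exists>A S. A \<in> P \<and> (S = X \<or> S = Y) \<and> U = A \<union> S)" for U
    unfolding Q_def by blast
  have XYne: "X \<noteq> {}" "Y \<noteq> {}" "X \<noteq> Y" using cX assms(3) unfolding X_def Y_def by auto
  have inV: "A \<union> S \<in> kneser_V (n + 2 * a) (r + a)" if "A \<in> P" "S = X \<or> S = Y" for A S
  proof -
    have "A \<inter> S = {}" "S \<subseteq> {1..n+2*a}" "finite S" using PV[OF that(1)] that(2) unfolding X_def Y_def by auto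
    moreover have "finite A" using PV[OF that(1)] finite_subset by blast
    moreover have "card S = a" using that(2) cX by auto
    ultimately show ?thesis using PV[OF that(1)] card_Un_disjoint[of A S] unfolding kneser_V_def by auto
  qed
  have QP: "two_packing (kneser_V (n + 2 * a) (r + a)) kneser_E Q"
    unfolding two_packing_def
  proof (intro conjI ballI impI)
    show "Q \<subseteq> kneser_V (n + 2 * a) (r + a)" unfolding Q_def using inV by blast
  next
    fix U W assume "U \<in> Q" "W \<in> Q" and UW: "U \<noteq> W"
    obtain A S where AS: "A \<in> P" "S = X \<or> S = Y" "U = A \<union> S"
      using Qalt[of U] \<open>U \<in> Q\<close> by blast
    obtain B S' where BS: "B \<in> P" "S' = X \<or> S' = Y" "W = B \<union> S'"
      using Qalt[of W] \<open>W \<in> Q\<close> by blast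
    have UV: "U \<in> kneser_V (n + 2 * a) (r + a)" "W \<in> kneser_V (n + 2 * a) (r + a)" using inV AS BS by auto
    have inter: "U \<inter> W \<noteq> {}"
    proof (cases "S = S'")
      case True
      then show ?thesis using AS BS XYne by auto
    next
      case False
      show ?thesis
      proof (cases "A = B")
        case True
        then have "A \<noteq> {}" using PV[OF AS(1)] assms(1) by auto
        then show ?thesis using AS BS True by auto
      next
        case False
        then show ?thesis using small_facts(1)[OF P AS(1) BS(1)] AS BS by auto
      qed
    qed
    have nc: False if C: "C \<in> kneser_V (n + 2 * a) (r + a)" "U \<inter> C = {}" "C \<inter> W = {}" for C
    proof -
      have "A \<noteq> B \<or> C \<inter> (X \<union> Y) = {}"
      proof (cases "A = B")
        case True
        then have "S \<noteq> S'" using UW AS BS by auto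
        then have "X \<union> Y \<subseteq> S \<union> S'" using AS BS by auto
        then show ?thesis using C AS BS by auto
      qed simp
      moreover have "C \<subseteq> {1..n+2*a}" "card C = r+a" using C(1) unfolding kneser_V_def by auto
      moreover have "C \<inter> S = {}" "C \<inter> A = {}" "C \<inter> B = {}" using C(2,3) AS(3) BS(3) by blast+
      ultimately show False using nocommon[of C S A B] AS(1,2) BS(1) by blast
    qed
    show "dist_ge (kneser_V (n + 2 * a) (r + a)) kneser_E 3 U W"
      unfolding dist_ge3 kneser_E_def using UW inter nc by blast
  qed
  have "card Q \<le> rho2_kneser (n + 2 * a) (r + a)"
    unfolding rho2_kneser_def rho2_def using QP fin by (intro Max_ge) auto
  then show ?thesis using cQ cP by simp
qed

end
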